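(* Let $K$ be a matrix convex set in $h$ self-adjoint variables that equals the matrix convex hull of its free extreme points, let $g<h$, and let $X\in\mathcal P_gK(n)$ be a free extreme point of $\mathcal P_gK$. Then either there is $Y$ with $(X,Y)$ a free extreme point of $K$, or there exist $Z\in\mathcal P_gK$ and $Y$ such that $(X\oplus Z,Y)$ is a free extreme point of $K$.
   Context: A matrix convex set $K$ is a graded set of self-adjoint tuples closed under matrix convex combinations $\sum_iV_i^*X^{(i)}V_i$ with $\sum_iV_i^*V_i=I$; $\mathrm{mconv}(S)$ is the smallest matrix convex set containing $S$ (no closure). A point $X\in K(n)$ is a free extreme point of $K$ if whenever $X=\sum_iV_i^*X^{(i)}V_i$ is a matrix convex combination of points of $K$ with all $V_i\ne0$, each $X^{(i)}$ is unitarily equivalent to $X$ or to $X\oplus Z$ for some $Z\in K$; equivalently $X$ is irreducible and has only trivial dilations in $K$. $\mathcal P_gK$ is the set of $X$ with $(X,Y)\in K$ for some $Y$ of the same size. *)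

theory Defs
  imports Complex_Main "Jordan_Normal_Form.Matrix"
begin

text \<open>A point of a graded set in d variables is a pair (n, X): a level n > 0 and a
 d-tuple X (list of length d) of self-adjoint complex n x n matrices.\<close>

type_synonym tup = "nat \<times> complex mat list"

definition cadj :: "complex mat \<Rightarrow> complex mat" where
  "cadj A = transpose_mat (map_mat cnj A)"

definition sa_tuple :: "nat \<Rightarrow> tup \<Rightarrow> bool" where
  "sa_tuple d P \<longleftrightarrow> (case P of (n, X) \<Rightarrow>
     0 < n \<and> length X = d \<and> (\<forall>A\<in>set X. A \<in> carrier_mat n n \<and> cadj A = A))"

definition msum :: "nat \<Rightarrow> complex mat list \<Rightarrow> complex mat" where
  "msum n L = foldr (+) L (0\<^sub>m n n)"

definition is_mcc :: "nat \<Rightarrow> tup \<Rightarrow> (complex mat \<times> tup) list \<Rightarrow> bool" where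
  "is_mcc d P L \<longleftrightarrow> (case P of (n, X) \<Rightarrow>
     L \<noteq> [] \<and> length X = d \<and>
     (\<forall>(V, Q)\<in>set L. V \<in> carrier_mat (fst Q) n) \<and>
     msum n (map (\<lambda>(V, Q). cadj V * V) L) = 1\<^sub>m n \<and>
     (\<forall>j<d. X ! j = msum n (map (\<lambda>(V, Q). cadj V * (snd Q ! j) * V) L)))"

definition matrix_convex :: "nat \<Rightarrow> tup set \<Rightarrow> bool" where
  "matrix_convex d K \<longleftrightarrow> (\<forall>P\<in>K. sa_tuple d P) \<and>
     (\<forall>n X L. 0 < n \<longrightarrow> (\<forall>(V, Q)\<in>set L. Q \<in> K) \<longrightarrow> is_mcc d (n, X) L \<longrightarrow> (n, X) \<in> K)"

definition mconv :: "nat \<Rightarrow> tup set \<Rightarrow> tup set" where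
  "mconv d S = \<Inter>{K. matrix_convex d K \<and> S \<subseteq> K}"

definition dsum :: "tup \<Rightarrow> tup \<Rightarrow> tup" where
  "dsum P Q = (case P of (n, X) \<Rightarrow> case Q of (m, Y) \<Rightarrow>
     (n + m, map2 (\<lambda>A B. four_block_mat A (0\<^sub>m n m) (0\<^sub>m m n) B) X Y))"

definition unit_equiv :: "tup \<Rightarrow> tup \<Rightarrow> bool" where
  "unit_equiv P Q \<longleftrightarrow> (case P of (n, X) \<Rightarrow> case Q of (m, Y) \<Rightarrow>
     n = m \<and> (\<exists>U\<in>carrier_mat n n. cadj U * U = 1\<^sub>m n \<and> U * cadj U = 1\<^sub>m n \<and>
        X = map (\<lambda>B. cadj U * B * U) Y))"

definition free_extreme :: "nat \<Rightarrow> tup set \<Rightarrow> tup \<Rightarrow> bool" where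
  "free_extreme d K P \<longleftrightarrow> P \<in> K \<and>
     (\<forall>L. (\<forall>(V, Q)\<in>set L. Q \<in> K \<and> V \<noteq> 0\<^sub>m (fst Q) (fst P)) \<longrightarrow> is_mcc d P L \<longrightarrow>
        (\<forall>(V, Q)\<in>set L. unit_equiv Q P \<or> (\<exists>Z\<in>K. unit_equiv Q (dsum P Z))))"

definition proj :: "nat \<Rightarrow> tup set \<Rightarrow> tup set" where
  "proj g K = {(n, X). length X = g \<and> (\<exists>Y. (n, X @ Y) \<in> K)}"

end

theory Submission
  imports Defs
begin

lemma cadj_carrier[simp]: "A \<in> carrier_mat m n \<Longrightarrow> cadj A \<in> carrier_mat n m"
  unfolding cadj_def by auto

lemma cadj_dims[simp]: "dim_row (cadj A) = dim_col A" "dim_col (cadj A) = dim_row A"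
  unfolding cadj_def by auto

lemma cadj_mult: assumes "A \<in> carrier_mat m k" "B \<in> carrier_mat k n"
  shows "cadj (A * B) = cadj B * cadj A"
  using assms unfolding cadj_def
  by (intro eq_matI) (auto simp: scalar_prod_def cnj_sum mult.commute intro!: sum.cong)

lemma cadj_cadj[simp]: "cadj (cadj A) = A"
  unfolding cadj_def by (intro eq_matI) auto

lemma cadj_one[simp]: "cadj (1\<^sub>m n) = 1\<^sub>m n"
  unfolding cadj_def by (intro eq_matI) auto

lemma cadj_zero[simp]: "cadj (0\<^sub>m m n) = 0\<^sub>m n m"
  unfolding cadj_def by (intro eq_matI) auto

lemma cadj_four_block: assumes "A \<in> carrier_mat nr1 nc1" "B \<in> carrier_mat nr1 nc2"
  "C \<in> carrier_mat nr2 nc1" "D \<in> carrier_mat nr2 nc2"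
  shows "cadj (four_block_mat A B C D) = four_block_mat (cadj A) (cadj C) (cadj B) (cadj D)"
  using assms unfolding cadj_def by (intro eq_matI) auto

lemma msum_Nil[simp]: "msum n [] = 0\<^sub>m n n" unfolding msum_def by simp
lemma msum_Cons[simp]: "msum n (x # xs) = x + msum n xs" unfolding msum_def by simp

lemma msum_carrier: "\<forall>x\<in>set L. x \<in> carrier_mat n n \<Longrightarrow> msum n L \<in> carrier_mat n n"
  by (induction L) auto

lemma msum_append: "\<forall>x\<in>set L. x \<in> carrier_mat n n \<Longrightarrow> \<forall>x\<in>set M. x \<in> carrier_mat n n \<Longrightarrow>
  msum n (L @ M) = msum n L + msum n M"
proof (induction L)
  case Nil then show ?case by (simp add: msum_carrier)
next
  case (Cons a L)
  have "msum n L \<in> carrier_mat n n" "msum n M \<in> carrier_mat n n" using Cons by (auto intro!: msum_carrier)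
  then show ?case using Cons assoc_add_mat[of a n n "msum n L" "msum n M"] by simp
qed

lemma msum_conj: assumes V: "V \<in> carrier_mat m n" and F: "\<forall>x\<in>set xs. F x \<in> carrier_mat m m"
  shows "msum n (map (\<lambda>x. cadj V * F x * V) xs) = cadj V * msum m (map F xs) * V"
  using F
proof (induction xs)
  case Nil then show ?case using V by simp
next
  case (Cons a xs)
  have c: "msum m (map F xs) \<in> carrier_mat m m" using Cons by (intro msum_carrier) auto
  have "cadj V * (F a + msum m (map F xs)) * V = (cadj V * F a + cadj V * msum m (map F xs)) * V"
    using V Cons c mult_add_distrib_mat[of "cadj V" n m "F a" m "msum m (map F xs)"] by simp
  also have "\<dots> = cadj V * F a * V + cadj V * msum m (map F xs) * V"
  proof -
    have "cadj V * F a \<in> carrier_mat n m" using V Cons by (intro mult_carrier_mat[of _ n m]) auto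
    moreover have "cadj V * msum m (map F xs) \<in> carrier_mat n m" using V c by (intro mult_carrier_mat[of _ n m]) auto
    ultimately show ?thesis using V add_mult_distrib_mat by blast
  qed
  finally show ?case using Cons by simp
qed

lemma msum_concat: assumes "\<forall>x\<in>set xs. \<forall>y\<in>set (f x). y \<in> carrier_mat n n"
  shows "msum n (concat (map f xs)) = msum n (map (\<lambda>x. msum n (f x)) xs)"
  using assms
proof (induction xs)
  case Nil then show ?case by simp
next
  case (Cons a xs) then show ?case by (simp add: msum_append)
qed

lemma msum_filter: assumes "\<forall>x\<in>set xs. f x \<in> carrier_mat n n" "\<forall>x\<in>set xs. \<not> P x \<longrightarrow> f x = 0\<^sub>m n n"
  shows "msum n (map f (filter P xs)) = msum n (map f xs)"
  using assms
proof (induction xs)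
  case Nil then show ?case by simp
next
  case (Cons a xs)
  have c: "msum n (map f xs) \<in> carrier_mat n n" using Cons by (intro msum_carrier) auto
  show ?case using Cons c by auto
qed


lemma massoc: "dim_col A = dim_row B \<Longrightarrow> dim_col B = dim_row C \<Longrightarrow> A * B * C = A * (B * C)"
  by (rule assoc_mult_mat[of A "dim_row A" "dim_col A" B "dim_col B" C "dim_col C"]) auto

definition unitary :: "nat \<Rightarrow> complex mat \<Rightarrow> bool" where
  "unitary m U \<longleftrightarrow> U \<in> carrier_mat m m \<and> cadj U * U = 1\<^sub>m m \<and> U * cadj U = 1\<^sub>m m"

lemma unitary_mult: assumes "unitary m S" "unitary m T" shows "unitary m (S * T)"
proof -
  have c: "S \<in> carrier_mat m m" "T \<in> carrier_mat m m" "cadj S \<in> carrier_mat m m" "cadj T \<in> carrier_mat m m"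
    using assms unfolding unitary_def by auto
  have "cadj (S * T) * (S * T) = cadj T * (cadj S * S) * T"
    using c by (simp add: cadj_mult[of _ m m _ m] massoc carrier_matD)
  also have "\<dots> = 1\<^sub>m m" using assms c unfolding unitary_def by simp
  finally have 1: "cadj (S * T) * (S * T) = 1\<^sub>m m" .
  have "(S * T) * cadj (S * T) = S * (T * cadj T) * cadj S"
    using c by (simp add: cadj_mult[of _ m m _ m] massoc carrier_matD)
  also have "\<dots> = 1\<^sub>m m" using assms c unfolding unitary_def by simp
  finally show ?thesis using 1 c unfolding unitary_def by simp
qed

lemma unitary_cadj: "unitary m U \<Longrightarrow> unitary m (cadj U)"
  unfolding unitary_def by auto

lemma unit_equiv_iff: "unit_equiv (k, Y) (m, W) \<longleftrightarrow> k = m \<and> (\<exists>U. unitary m U \<and> Y = map (\<lambda>B. cadj U * B * U) W)"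
  unfolding unit_equiv_def unitary_def by auto

lemma ue_trans: assumes "unit_equiv (k, Y) (m, W)" "unitary m S" "W = map (\<lambda>B. cadj S * B * S) W'"
  "\<forall>B\<in>set W'. B \<in> carrier_mat m m"
  shows "unit_equiv (k, Y) (m, W')"
proof -
  obtain T where k: "k = m" and T: "unitary m T" and Y: "Y = map (\<lambda>B. cadj T * B * T) W"
    using assms(1) unfolding unit_equiv_iff by auto
  have c: "S \<in> carrier_mat m m" "T \<in> carrier_mat m m" "cadj S \<in> carrier_mat m m" "cadj T \<in> carrier_mat m m"
    using assms T unfolding unitary_def by auto
  have "Y = map (\<lambda>B. cadj (S * T) * B * (S * T)) W'"
    unfolding Y assms(3) using c assms(4) by (auto simp: cadj_mult[of _ m m _ m] massoc carrier_matD)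
  then show ?thesis unfolding unit_equiv_iff using k unitary_mult[OF assms(2) T] by blast
qed


definition bdiag :: "nat \<Rightarrow> nat \<Rightarrow> complex mat \<Rightarrow> complex mat \<Rightarrow> complex mat" where
  "bdiag m k A B = four_block_mat A (0\<^sub>m m k) (0\<^sub>m k m) B"

lemma bdiag_carrier: "A \<in> carrier_mat m m \<Longrightarrow> B \<in> carrier_mat k k \<Longrightarrow> bdiag m k A B \<in> carrier_mat (m+k) (m+k)"
  unfolding bdiag_def by auto

lemma bdiag_mult: assumes "A \<in> carrier_mat m m" "B \<in> carrier_mat k k" "C \<in> carrier_mat m m" "D \<in> carrier_mat k k"
  shows "bdiag m k A B * bdiag m k C D = bdiag m k (A * C) (B * D)"
  unfolding bdiag_def using assms
  by (subst mult_four_block_mat[of A m m "0\<^sub>m m k" k "0\<^sub>m k m" k B C m "0\<^sub>m m k" k "0\<^sub>m k m" D]) auto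

lemma bdiag_cadj: assumes "A \<in> carrier_mat m m" "B \<in> carrier_mat k k"
  shows "cadj (bdiag m k A B) = bdiag m k (cadj A) (cadj B)"
  unfolding bdiag_def using assms by (subst cadj_four_block[of A m m _ k _ k]) auto

lemma bdiag_one: "bdiag m k (1\<^sub>m m) (1\<^sub>m k) = 1\<^sub>m (m + k)"
  unfolding bdiag_def by (intro eq_matI) auto

lemma unitary_bdiag: assumes "unitary m S" shows "unitary (m+k) (bdiag m k S (1\<^sub>m k))"
proof -
  have c: "S \<in> carrier_mat m m" "cadj S \<in> carrier_mat m m" using assms unfolding unitary_def by auto
  show ?thesis unfolding unitary_def using c assms
    by (auto simp: bdiag_carrier bdiag_cadj bdiag_mult bdiag_one unitary_def)
qed

lemma bdiag_conj: assumes "S \<in> carrier_mat m m" "A \<in> carrier_mat m m" "B \<in> carrier_mat k k"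
  shows "cadj (bdiag m k S (1\<^sub>m k)) * bdiag m k A B * bdiag m k S (1\<^sub>m k) = bdiag m k (cadj S * A * S) B"
proof -
  have "cadj S * A \<in> carrier_mat m m" using assms by (intro mult_carrier_mat[of _ m m]) auto
  then show ?thesis
    using assms by (simp add: bdiag_cadj bdiag_mult)
qed

lemma dsum_alt: "dsum (m, W) (k, Zs) = (m + k, map2 (bdiag m k) W Zs)"
  unfolding dsum_def bdiag_def by simp

lemma ue_dsum: assumes "unit_equiv Q (dsum (m, W) (k, Zs))" "unitary m S" "W = map (\<lambda>B. cadj S * B * S) W'"
  "\<forall>B\<in>set W'. B \<in> carrier_mat m m" "\<forall>B\<in>set Zs. B \<in> carrier_mat k k"
  shows "unit_equiv Q (dsum (m, W') (k, Zs))"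
proof -
  obtain q Y where Q: "Q = (q, Y)" by force
  let ?D = "bdiag m k S (1\<^sub>m k)"
  have S: "S \<in> carrier_mat m m" using assms unfolding unitary_def by auto
  have zc: "\<forall>(a, b)\<in>set (zip W' Zs). a \<in> carrier_mat m m \<and> b \<in> carrier_mat k k"
    using assms(4,5) by (auto dest: set_zip_leftD set_zip_rightD)
  have e: "map2 (bdiag m k) W Zs = map (\<lambda>B. cadj ?D * B * ?D) (map2 (bdiag m k) W' Zs)"
    unfolding assms(3) zip_map1 map_map
    by (intro map_cong refl) (use zc S in \<open>auto simp: bdiag_conj\<close>)
  have "\<forall>B\<in>set (map2 (bdiag m k) W' Zs). B \<in> carrier_mat (m+k) (m+k)"
    using assms(4,5) by (auto dest: set_zip_leftD set_zip_rightD intro!: bdiag_carrier)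
  then show ?thesis using assms(1) unfolding Q dsum_alt
    by (intro ue_trans[OF _ unitary_bdiag[OF assms(2)] e]) auto
qed


lemma conj_mult: assumes "V \<in> carrier_mat q m" "A \<in> carrier_mat q q" "U \<in> carrier_mat m n"
  shows "cadj (V * U) * A * (V * U) = cadj U * (cadj V * A * V) * U"
  using assms by (simp add: cadj_mult[of V q m U n] massoc carrier_matD)

lemma gram_carrier[simp]: "V \<in> carrier_mat q m \<Longrightarrow> cadj V * V \<in> carrier_mat m m"
  by (rule mult_carrier_mat[of _ m q]) auto

lemma conjm_carrier[simp]: "V \<in> carrier_mat q m \<Longrightarrow> A \<in> carrier_mat q q \<Longrightarrow> cadj V * A * V \<in> carrier_mat m m"
  by (rule mult_carrier_mat[of _ m q], rule mult_carrier_mat[of _ m q]) auto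

lemma conj_mult1: assumes "V \<in> carrier_mat q m" "U \<in> carrier_mat m n"
  shows "cadj (V * U) * (V * U) = cadj U * (cadj V * V) * U"
  using assms by (simp add: cadj_mult[of V q m U n] massoc carrier_matD)

lemma K_sa: assumes "matrix_convex h K" "(q, Y) \<in> K"
  shows "0 < q" "length Y = h" "\<forall>A\<in>set Y. A \<in> carrier_mat q q"
  using assms unfolding matrix_convex_def sa_tuple_def by auto

lemma K_sa_nth: assumes "matrix_convex h K" "Q \<in> K" "j < h"
  shows "snd Q ! j \<in> carrier_mat (fst Q) (fst Q)"
  using K_sa[of h K "fst Q" "snd Q"] assms by auto

lemma mcc_conj: assumes mc: "matrix_convex h K" and L: "\<forall>(V, Q)\<in>set L. Q \<in> K"
  and mcc: "is_mcc h (m, W') L" and U: "U \<in> carrier_mat m n"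
  shows "msum n (map (\<lambda>(V, Q). cadj V * V) (map (\<lambda>(V, Q). (V * U, Q)) L)) = cadj U * U"
    "\<And>j. j < h \<Longrightarrow> msum n (map (\<lambda>(V, Q). cadj V * (snd Q ! j) * V) (map (\<lambda>(V, Q). (V * U, Q)) L))
       = cadj U * (W' ! j) * U"
proof -
  have Lc: "\<forall>(V, Q)\<in>set L. V \<in> carrier_mat (fst Q) m" using mcc unfolding is_mcc_def by auto
  have "msum n (map (\<lambda>(V, Q). cadj V * V) (map (\<lambda>(V, Q). (V * U, Q)) L))
      = msum n (map (\<lambda>x. cadj U * (case x of (V, Q) \<Rightarrow> cadj V * V) * U) L)"
    unfolding map_map
    by (intro arg_cong[where f="msum n"] map_cong refl)
       (use Lc U in \<open>auto simp: conj_mult1\<close>)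
  also have "\<dots> = cadj U * msum m (map (\<lambda>(V, Q). cadj V * V) L) * U"
    by (rule msum_conj[OF U]) (use Lc in auto)
  also have "\<dots> = cadj U * U" using mcc U unfolding is_mcc_def by simp
  finally show "msum n (map (\<lambda>(V, Q). cadj V * V) (map (\<lambda>(V, Q). (V * U, Q)) L)) = cadj U * U" .
  fix j assume j: "j < h"
  have Lc2: "\<forall>(V, Q)\<in>set L. snd Q ! j \<in> carrier_mat (fst Q) (fst Q)"
    using L K_sa_nth[OF mc _ j] by auto
  have "msum n (map (\<lambda>(V, Q). cadj V * (snd Q ! j) * V) (map (\<lambda>(V, Q). (V * U, Q)) L))
      = msum n (map (\<lambda>x. cadj U * (case x of (V, Q) \<Rightarrow> cadj V * (snd Q ! j) * V) * U) L)"
    unfolding map_map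
    by (intro arg_cong[where f="msum n"] map_cong refl)
       (use Lc Lc2 U in \<open>fastforce intro!: conj_mult\<close>)
  also have "\<dots> = cadj U * msum m (map (\<lambda>(V, Q). cadj V * (snd Q ! j) * V) L) * U"
    by (rule msum_conj[OF U]) (use Lc Lc2 in \<open>fastforce intro!: conjm_carrier\<close>)
  also have "\<dots> = cadj U * (W' ! j) * U" using mcc j unfolding is_mcc_def by simp
  finally show "msum n (map (\<lambda>(V, Q). cadj V * (snd Q ! j) * V) (map (\<lambda>(V, Q). (V * U, Q)) L))
       = cadj U * (W' ! j) * U" .
qed


lemma msum_single: "A \<in> carrier_mat n n \<Longrightarrow> msum n [A] = A" by simp

lemma fe_conj: assumes mc: "matrix_convex h K" and fe: "free_extreme h K (m, W)" and U: "unitary m U"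
  shows "free_extreme h K (m, map (\<lambda>B. U * B * cadj U) W)"
proof -
  define W' where "W' = map (\<lambda>B. U * B * cadj U) W"
  have inK: "(m, W) \<in> K" using fe unfolding free_extreme_def by auto
  note sa = K_sa[OF mc inK]
  have Uc: "U \<in> carrier_mat m m" "cadj U \<in> carrier_mat m m" and Uu: "cadj U * U = 1\<^sub>m m" "U * cadj U = 1\<^sub>m m"
    using U unfolding unitary_def by auto
  have W'c: "\<forall>B\<in>set W'. B \<in> carrier_mat m m" using sa Uc unfolding W'_def
    by (auto intro!: mult_carrier_mat[of _ m m])
  have WW': "W = map (\<lambda>B. cadj U * B * U) W'"
  proof -
    have "\<forall>B\<in>set W. cadj U * (U * B * cadj U) * U = B"
    proof
      fix B assume "B \<in> set W"
      then have B: "B \<in> carrier_mat m m" using sa by auto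
      have "cadj U * (U * B * cadj U) * U = (cadj U * U) * B * (cadj U * U)"
        using B Uc by (simp add: massoc carrier_matD)
      then show "cadj U * (U * B * cadj U) * U = B" using Uu B by simp
    qed
    then show ?thesis unfolding W'_def map_map by (simp add: map_idI)
  qed
  have lenW': "length W' = h" using sa unfolding W'_def by simp
  have W'K: "(m, W') \<in> K"
  proof -
    have "is_mcc h (m, W') [(cadj U, (m, W))]"
      unfolding is_mcc_def using Uc Uu lenW' sa
      by (auto simp: W'_def intro!: msum_single)
    moreover have "\<forall>(V, Q)\<in>set [(cadj U, (m, W))]. Q \<in> K" using inK by auto
    ultimately show ?thesis using mc sa(1) unfolding matrix_convex_def by blast
  qed
  show ?thesis unfolding free_extreme_def W'_def[symmetric]
  proof (intro conjI W'K allI impI)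
    fix L assume H1: "\<forall>(V, Q)\<in>set L. Q \<in> K \<and> V \<noteq> 0\<^sub>m (fst Q) (fst (m, W'))"
      and H2: "is_mcc h (m, W') L"
    define L' where "L' = map (\<lambda>(V, Q). (V * U, Q)) L"
    have Lc: "\<forall>(V, Q)\<in>set L. V \<in> carrier_mat (fst Q) m" using H2 unfolding is_mcc_def by auto
    have LK: "\<forall>(V, Q)\<in>set L. Q \<in> K" using H1 by auto
    have H1': "\<forall>(V, Q)\<in>set L'. Q \<in> K \<and> V \<noteq> 0\<^sub>m (fst Q) (fst (m, W))"
    proof -
      { fix V Q assume VQ: "(V, Q) \<in> set L" and z: "V * U = 0\<^sub>m (fst Q) m"
        have Vc: "V \<in> carrier_mat (fst Q) m" using Lc VQ by auto
        have "V = V * U * cadj U" using Vc Uc Uu by (simp add: massoc carrier_matD)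
        also have "\<dots> = 0\<^sub>m (fst Q) m" using z Uc by simp
        finally have False using H1 VQ by auto }
      then show ?thesis using H1 unfolding L'_def by auto
    qed
    have H2': "is_mcc h (m, W) L'"
    proof -
      have "L' \<noteq> []" using H2 unfolding L'_def is_mcc_def by auto
      moreover have "\<forall>(V, Q)\<in>set L'. V \<in> carrier_mat (fst Q) m"
        using Lc Uc unfolding L'_def by (auto intro!: mult_carrier_mat[of _ _ m])
      moreover have "msum m (map (\<lambda>(V, Q). cadj V * V) L') = 1\<^sub>m m"
        unfolding L'_def using mcc_conj(1)[OF mc LK H2 Uc(1)] Uu by simp
      moreover have "\<forall>j<h. W ! j = msum m (map (\<lambda>(V, Q). cadj V * (snd Q ! j) * V) L')"
        unfolding L'_def using mcc_conj(2)[OF mc LK H2 Uc(1)] WW' lenW' by simp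
      ultimately show ?thesis unfolding is_mcc_def using sa by auto
    qed
    have C: "\<forall>(V, Q)\<in>set L'. unit_equiv Q (m, W) \<or> (\<exists>Z\<in>K. unit_equiv Q (dsum (m, W) Z))"
      using fe H1' H2' unfolding free_extreme_def by blast
    have R: "unit_equiv (q, Y) (m, W') \<or> (\<exists>Z\<in>K. unit_equiv (q, Y) (dsum (m, W') Z))"
      if VQ: "(V, (q, Y)) \<in> set L" for V q Y
    proof -
      from VQ have "(V * U, (q, Y)) \<in> set L'" unfolding L'_def by force
      then have "unit_equiv (q, Y) (m, W) \<or> (\<exists>Z\<in>K. unit_equiv (q, Y) (dsum (m, W) Z))" using C by auto
      then show "unit_equiv (q, Y) (m, W') \<or> (\<exists>Z\<in>K. unit_equiv (q, Y) (dsum (m, W') Z))"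
      proof
        assume "unit_equiv (q, Y) (m, W)"
        then show ?thesis using ue_trans[OF _ U WW' W'c] by auto
      next
        assume "\<exists>Z\<in>K. unit_equiv (q, Y) (dsum (m, W) Z)"
        then obtain k Zs where ZK: "(k, Zs) \<in> K" and e: "unit_equiv (q, Y) (dsum (m, W) (k, Zs))" by auto
        have "unit_equiv (q, Y) (dsum (m, W') (k, Zs))"
          using ue_dsum[OF e U WW' W'c K_sa(3)[OF mc ZK]] .
        then show ?thesis using ZK by auto
      qed
    qed
    show "\<forall>(V, Q)\<in>set L. unit_equiv Q (m, W') \<or> (\<exists>Z\<in>K. unit_equiv Q (dsum (m, W') Z))"
      using R by fastforce
  qed
qed


definition decomp :: "nat \<Rightarrow> tup set \<Rightarrow> tup \<Rightarrow> bool" where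
  "decomp h E P \<longleftrightarrow> (\<exists>L. (\<forall>(V, Q)\<in>set L. Q \<in> E) \<and> is_mcc h P L)"

lemma mcc_compose: assumes mc: "matrix_convex h K" and EK: "E \<subseteq> K"
  and L: "\<forall>(V, Q)\<in>set L. Q \<in> K \<and> decomp h E Q" and mcc: "is_mcc h (n, X) L"
  shows "decomp h E (n, X)"
proof -
  have "\<forall>x\<in>set L. \<exists>M. (\<forall>(W, R)\<in>set M. R \<in> E) \<and> is_mcc h (snd x) M"
    using L unfolding decomp_def by auto
  then obtain f where f: "\<forall>x\<in>set L. (\<forall>(W, R)\<in>set (f x). R \<in> E) \<and> is_mcc h (snd x) (f x)"
    by metis
  define L' where "L' = concat (map (\<lambda>x. map (\<lambda>(W, R). (W * fst x, R)) (f x)) L)"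
  have Lc: "\<forall>(V, Q)\<in>set L. V \<in> carrier_mat (fst Q) n" using mcc unfolding is_mcc_def by auto
  have fc: "\<forall>x\<in>set L. \<forall>(W, R)\<in>set (f x). W \<in> carrier_mat (fst R) (fst (snd x))"
    using f unfolding is_mcc_def by (auto simp: split_beta)
  have fK: "\<forall>x\<in>set L. \<forall>(W, R)\<in>set (f x). R \<in> K" using f EK by blast
  have fmcc: "\<forall>x\<in>set L. is_mcc h (fst (snd x), snd (snd x)) (f x)" using f by auto
  have ne: "L' \<noteq> []"
  proof -
    obtain x where x: "x \<in> set L" using mcc unfolding is_mcc_def by (cases L) auto
    then have "f x \<noteq> []" using f unfolding is_mcc_def by (auto simp: split_beta)
    then show ?thesis using x unfolding L'_def by auto
  qed
  have E': "\<forall>(V, Q)\<in>set L'. Q \<in> E" using f unfolding L'_def by fastforce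
  have c': "\<forall>(V, Q)\<in>set L'. V \<in> carrier_mat (fst Q) n"
    unfolding L'_def using fc Lc by (fastforce intro!: mult_carrier_mat)
  have c'K: "\<forall>(V, Q)\<in>set L'. Q \<in> K" using E' EK by auto
  have s1: "msum n (map (\<lambda>(V, Q). cadj V * V) L') = 1\<^sub>m n"
  proof -
    have "msum n (map (\<lambda>(V, Q). cadj V * V) L') =
      msum n (map (\<lambda>x. msum n (map (\<lambda>(V, Q). cadj V * V) (map (\<lambda>(W, R). (W * fst x, R)) (f x)))) L)"
      unfolding L'_def map_concat map_map o_def
      by (rule msum_concat) (use fc Lc in \<open>fastforce intro!: gram_carrier mult_carrier_mat\<close>)
    also have "\<dots> = msum n (map (\<lambda>(V, Q). cadj V * V) L)"
    proof (intro arg_cong[where f="msum n"] map_cong refl)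
      fix x assume x: "x \<in> set L"
      show "msum n (map (\<lambda>(V, Q). cadj V * V) (map (\<lambda>(W, R). (W * fst x, R)) (f x))) = (case x of (V, Q) \<Rightarrow> cadj V * V)"
        using mcc_conj(1)[OF mc, of "f x" "fst (snd x)" "snd (snd x)" "fst x" n] fK fmcc Lc x
        by (auto simp: split_beta)
    qed
    also have "\<dots> = 1\<^sub>m n" using mcc unfolding is_mcc_def by auto
    finally show ?thesis .
  qed
  have s2: "X ! j = msum n (map (\<lambda>(V, Q). cadj V * (snd Q ! j) * V) L')" if j: "j < h" for j
  proof -
    have "msum n (map (\<lambda>(V, Q). cadj V * (snd Q ! j) * V) L') =
      msum n (map (\<lambda>x. msum n (map (\<lambda>(V, Q). cadj V * (snd Q ! j) * V) (map (\<lambda>(W, R). (W * fst x, R)) (f x)))) L)"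
      unfolding L'_def map_concat map_map o_def
      by (rule msum_concat) (use fc Lc fK K_sa_nth[OF mc _ j] in \<open>fastforce intro!: conjm_carrier mult_carrier_mat\<close>)
    also have "\<dots> = msum n (map (\<lambda>(V, Q). cadj V * (snd Q ! j) * V) L)"
    proof (intro arg_cong[where f="msum n"] map_cong refl)
      fix x assume x: "x \<in> set L"
      show "msum n (map (\<lambda>(V, Q). cadj V * (snd Q ! j) * V) (map (\<lambda>(W, R). (W * fst x, R)) (f x))) = (case x of (V, Q) \<Rightarrow> cadj V * (snd Q ! j) * V)"
        using mcc_conj(2)[OF mc, of "f x" "fst (snd x)" "snd (snd x)" "fst x" n j] fK fmcc Lc x j
        by (auto simp: split_beta)
    qed
    also have "\<dots> = X ! j" using mcc j unfolding is_mcc_def by auto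
    finally show ?thesis by simp
  qed
  have "is_mcc h (n, X) L'" unfolding is_mcc_def using ne c' s1 s2 mcc unfolding is_mcc_def by auto
  then show ?thesis unfolding decomp_def using E' by blast
qed

lemma triv_id: "(A :: complex mat) \<in> carrier_mat m m \<Longrightarrow> A = 1\<^sub>m m * A * 1\<^sub>m m + 0\<^sub>m m m"
  using left_mult_one_mat[of A m m] right_mult_one_mat[of A m m] right_add_zero_mat[of A m m] by simp

lemma mconv_decomp: assumes mc: "matrix_convex h K" and EK: "E \<subseteq> K"
  shows "mconv h E \<subseteq> {P \<in> K. decomp h E P}"
proof -
  have "matrix_convex h {P \<in> K. decomp h E P}"
    unfolding matrix_convex_def
  proof (intro conjI allI impI ballI)
    fix P assume "P \<in> {P \<in> K. decomp h E P}"
    then show "sa_tuple h P" using mc unfolding matrix_convex_def by auto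
  next
    fix n X L assume n: "0 < n" and L: "\<forall>(V, Q)\<in>set L. Q \<in> {P \<in> K. decomp h E P}"
      and m: "is_mcc h (n, X) L"
    have "\<forall>(V, Q)\<in>set L. Q \<in> K" using L by auto
    then have "(n, X) \<in> K" using mc n m unfolding matrix_convex_def by blast
    moreover have "decomp h E (n, X)" using mcc_compose[OF mc EK _ m] L by auto
    ultimately show "(n, X) \<in> {P \<in> K. decomp h E P}" by auto
  qed
  moreover have "E \<subseteq> {P \<in> K. decomp h E P}"
  proof
    fix P assume P: "P \<in> E"
    obtain m W where PW: "P = (m, W)" by force
    have PK: "(m, W) \<in> K" using P PW EK by auto
    note sa = K_sa[OF mc PK]
    have "\<forall>j<length W. W ! j \<in> carrier_mat m m" using sa by auto
    then have "is_mcc h (m, W) [(1\<^sub>m m, (m, W))]"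
      unfolding is_mcc_def using sa by (auto intro!: triv_id)
    moreover have "\<forall>(V, Q)\<in>set [(1\<^sub>m m, (m, W))]. Q \<in> E" using P PW by auto
    ultimately show "P \<in> {P \<in> K. decomp h E P}" using PW PK unfolding decomp_def by blast
  qed
  ultimately show ?thesis unfolding mconv_def by blast
qed


lemma unconj: assumes "\<forall>B\<in>set D. B \<in> carrier_mat m m" "unitary m U"
  shows "map (\<lambda>B. U * B * cadj U) (map (\<lambda>B. cadj U * B * U) D) = D"
proof -
  have Uc: "U \<in> carrier_mat m m" "cadj U \<in> carrier_mat m m" and Uu: "cadj U * U = 1\<^sub>m m" "U * cadj U = 1\<^sub>m m"
    using assms unfolding unitary_def by auto
  have "\<forall>B\<in>set D. U * (cadj U * B * U) * cadj U = B"
  proof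
    fix B assume "B \<in> set D"
    then have B: "B \<in> carrier_mat m m" using assms by auto
    have "U * (cadj U * B * U) * cadj U = (U * cadj U) * B * (U * cadj U)"
      using B Uc by (simp add: massoc carrier_matD)
    then show "U * (cadj U * B * U) * cadj U = B" using Uu B by simp
  qed
  then show ?thesis unfolding map_map by (simp add: map_idI)
qed

lemma fe_reconj: assumes mc: "matrix_convex h K" and fe: "free_extreme h K (q, W)"
  and ue: "unit_equiv (q, take g W) (m, D)" and Dc: "\<forall>B\<in>set D. B \<in> carrier_mat m m"
  shows "\<exists>Y. free_extreme h K (m, D @ Y)"
proof -
  obtain U where qm: "q = m" and U: "unitary m U" and A: "take g W = map (\<lambda>B. cadj U * B * U) D"
    using ue unfolding unit_equiv_iff by auto
  have "free_extreme h K (m, map (\<lambda>B. U * B * cadj U) W)" using fe_conj[OF mc _ U] fe qm by simp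
  moreover have "map (\<lambda>B. U * B * cadj U) W = D @ map (\<lambda>B. U * B * cadj U) (drop g W)"
  proof -
    have "map (\<lambda>B. U * B * cadj U) W = map (\<lambda>B. U * B * cadj U) (take g W) @ map (\<lambda>B. U * B * cadj U) (drop g W)"
      by (metis append_take_drop_id map_append)
    then show ?thesis unfolding A unconj[OF Dc U] .
  qed
  ultimately show ?thesis by auto
qed


lemma zero_conj: "cadj (0\<^sub>m q n) * A * 0\<^sub>m q n = (0\<^sub>m n n :: complex mat)"
  by (intro eq_matI) (auto simp: scalar_prod_def)

theorem mainTheorem14:
  fixes h g n :: nat and K :: "tup set" and X :: "complex mat list"
  assumes "matrix_convex h K"
    and "K = mconv h {P \<in> K. free_extreme h K P}"
    and "g < h"
    and "(n, X) \<in> proj g K"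
    and "free_extreme g (proj g K) (n, X)"
  shows "(\<exists>Y. free_extreme h K (n, X @ Y)) \<or>
         (\<exists>Z \<in> proj g K. \<exists>Y. free_extreme h K (fst (dsum (n, X) Z), snd (dsum (n, X) Z) @ Y))"
proof -
  note mc = assms(1)
  define E where "E = {P \<in> K. free_extreme h K P}"
  have EK: "E \<subseteq> K" unfolding E_def by auto
  obtain Y0 where lenX: "length X = g" and XY: "(n, X @ Y0) \<in> K" using assms(4) unfolding proj_def by auto
  have n0: "0 < n" using K_sa[OF mc XY] by auto
  have Xc: "\<forall>B\<in>set X. B \<in> carrier_mat n n" using K_sa[OF mc XY] by auto
  have "(n, X @ Y0) \<in> mconv h E" using XY assms(2) unfolding E_def by simp
  then have "decomp h E (n, X @ Y0)" using mconv_decomp[OF mc EK] by auto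
  then obtain L where LE: "\<forall>(V, Q)\<in>set L. Q \<in> E" and mcc: "is_mcc h (n, X @ Y0) L"
    unfolding decomp_def by auto
  have Lc: "\<forall>(V, Q)\<in>set L. V \<in> carrier_mat (fst Q) n" using mcc unfolding is_mcc_def by auto
  have LK: "\<forall>(V, Q)\<in>set L. Q \<in> K" using LE EK by auto
  define P where "P = (\<lambda>(V :: complex mat, Q :: tup). V \<noteq> 0\<^sub>m (fst Q) n)"
  define pr where "pr = (\<lambda>(V :: complex mat, Q :: tup). (V, (fst Q, take g (snd Q))))"
  define Lg where "Lg = map pr (filter P L)"
  have Lg1: "\<forall>(V, Q')\<in>set Lg. Q' \<in> proj g K \<and> V \<noteq> 0\<^sub>m (fst Q') (fst (n, X))"
  proof -
    { fix V q W assume VQ: "(V, (q, W)) \<in> set L" and P: "P (V, (q, W))"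
      have qW: "(q, W) \<in> K" using LK VQ by auto
      have "length W = h" using K_sa[OF mc qW] by auto
      then have "(q, take g W) \<in> proj g K" using qW assms(3) unfolding proj_def by (auto intro!: exI[of _ "drop g W"])
      moreover have "V \<noteq> 0\<^sub>m q n" using P unfolding P_def by auto
      ultimately have "(q, take g W) \<in> proj g K \<and> V \<noteq> 0\<^sub>m q n" by auto }
    then show ?thesis unfolding Lg_def pr_def by fastforce
  qed
  have sum_filter: "msum n (map F (filter P L)) = msum n (map F L)"
    if Fc: "\<forall>x\<in>set L. F x \<in> carrier_mat n n" and F0: "\<And>q W. F (0\<^sub>m q n, (q, W)) = 0\<^sub>m n n" for F
  proof (rule msum_filter[OF Fc])
    show "\<forall>x\<in>set L. \<not> P x \<longrightarrow> F x = 0\<^sub>m n n" using F0 unfolding P_def by auto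
  qed
  have s1: "msum n (map (\<lambda>(V, Q). cadj V * V) (filter P L)) = 1\<^sub>m n"
  proof -
    have "\<forall>x\<in>set L. (case x of (V, Q) \<Rightarrow> cadj V * V) \<in> carrier_mat n n"
    proof
      fix x assume x: "x \<in> set L"
      obtain V Q where xe: "x = (V, Q)" by (cases x) blast
      have "V \<in> carrier_mat (fst Q) n" using Lc x xe by auto
      then show "(case x of (V, Q) \<Rightarrow> cadj V * V) \<in> carrier_mat n n"
        using xe gram_carrier[of V "fst Q" n] by simp
    qed
    then have "msum n (map (\<lambda>(V, Q). cadj V * V) (filter P L)) = msum n (map (\<lambda>(V, Q). cadj V * V) L)"
      using sum_filter[of "\<lambda>(V, Q). cadj V * V"] by simp
    then show ?thesis using mcc unfolding is_mcc_def by simp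
  qed
  have Lgne: "Lg \<noteq> []"
  proof
    assume "Lg = []"
    then have "filter P L = []" unfolding Lg_def by simp
    then have "1\<^sub>m n = (0\<^sub>m n n :: complex mat)" using s1 by simp
    then have "(1\<^sub>m n :: complex mat) $$ (0, 0) = 0\<^sub>m n n $$ (0, 0)" by simp
    then show False using n0 by simp
  qed
  have mccg: "is_mcc g (n, X) Lg"
  proof -
    have c: "\<forall>(V, Q)\<in>set Lg. V \<in> carrier_mat (fst Q) n" using Lc unfolding Lg_def pr_def by auto
    have e1: "msum n (map (\<lambda>(V, Q). cadj V * V) Lg) = 1\<^sub>m n"
      using s1[unfolded split_beta] unfolding Lg_def map_map by (simp add: pr_def comp_def split_beta)
    have e2: "X ! j = msum n (map (\<lambda>(V, Q). cadj V * (snd Q ! j) * V) Lg)" if j: "j < g" for j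
    proof -
      have jh: "j < h" using j assms(3) by auto
      have "msum n (map (\<lambda>(V, Q). cadj V * (snd Q ! j) * V) Lg) =
          msum n (map (\<lambda>(V, Q). cadj V * (snd Q ! j) * V) (filter P L))"
        unfolding Lg_def map_map split_beta using j by (simp add: pr_def comp_def split_beta)
      also have "\<dots> = msum n (map (\<lambda>(V, Q). cadj V * (snd Q ! j) * V) L)"
      proof -
        have "\<forall>x\<in>set L. (case x of (V, Q) \<Rightarrow> cadj V * (snd Q ! j) * V) \<in> carrier_mat n n"
        proof
          fix x assume x: "x \<in> set L"
          obtain V Q where xe: "x = (V, Q)" by (cases x) blast
          have "V \<in> carrier_mat (fst Q) n" "Q \<in> K" using Lc LK x xe by auto
          then show "(case x of (V, Q) \<Rightarrow> cadj V * (snd Q ! j) * V) \<in> carrier_mat n n"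
            using xe conjm_carrier[of V "fst Q" n "snd Q ! j"] K_sa_nth[OF mc _ jh] by simp
        qed
        then show ?thesis using sum_filter[of "\<lambda>(V, Q). cadj V * (snd Q ! j) * V"] by (simp add: zero_conj[simplified])
      qed
      also have "\<dots> = (X @ Y0) ! j" using mcc jh unfolding is_mcc_def by auto
      also have "\<dots> = X ! j" using j lenX by (simp add: nth_append)
      finally show ?thesis by simp
    qed
    show ?thesis unfolding is_mcc_def using Lgne lenX c e1 e2 by auto
  qed
  have res: "\<forall>(V, Q)\<in>set Lg. unit_equiv Q (n, X) \<or> (\<exists>Z\<in>proj g K. unit_equiv Q (dsum (n, X) Z))"
    using assms(5) Lg1 mccg unfolding free_extreme_def by blast
  obtain V q W where VQ: "(V, (q, W)) \<in> set L" and inLg: "(V, (q, take g W)) \<in> set Lg"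
  proof -
    obtain x where "x \<in> set Lg" using Lgne by (cases Lg) auto
    then obtain y where y: "y \<in> set (filter P L)" "x = pr y" unfolding Lg_def by auto
    obtain V q W where "y = (V, (q, W))" by (cases y) auto
    then show ?thesis using that y \<open>x \<in> set Lg\<close> unfolding pr_def by auto
  qed
  have feQ: "free_extreme h K (q, W)" using LE VQ unfolding E_def by auto
  have "unit_equiv (q, take g W) (n, X) \<or> (\<exists>Z\<in>proj g K. unit_equiv (q, take g W) (dsum (n, X) Z))"
    using res inLg by auto
  then show ?thesis
  proof
    assume "unit_equiv (q, take g W) (n, X)"
    then show ?thesis using fe_reconj[OF mc feQ _ Xc] by auto
  next
    assume "\<exists>Z\<in>proj g K. unit_equiv (q, take g W) (dsum (n, X) Z)"
    then obtain k Zs where Z: "(k, Zs) \<in> proj g K" and ue: "unit_equiv (q, take g W) (dsum (n, X) (k, Zs))"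
      by auto
    obtain Y1 where ZY: "(k, Zs @ Y1) \<in> K" using Z unfolding proj_def by auto
    have Zc: "\<forall>B\<in>set Zs. B \<in> carrier_mat k k" using K_sa[OF mc ZY] by auto
    have Dc: "\<forall>B\<in>set (map2 (bdiag n k) X Zs). B \<in> carrier_mat (n + k) (n + k)"
      using Xc Zc by (auto dest: set_zip_leftD set_zip_rightD intro!: bdiag_carrier)
    have "\<exists>Y. free_extreme h K (n + k, map2 (bdiag n k) X Zs @ Y)"
      using fe_reconj[OF mc feQ _ Dc] ue unfolding dsum_alt by auto
    then have "\<exists>Y. free_extreme h K (fst (dsum (n, X) (k, Zs)), snd (dsum (n, X) (k, Zs)) @ Y)"
      unfolding dsum_alt by simp
    then show ?thesis using Z by blast
  qed
qed

end
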